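(* Let $K>0$, $D>0$, $\sigma>0$, $r\in\mathbf{R}$, $0<\tau<T$, and let $N$ denote the standard normal cumulative distribution function. For $u>0$ define the pre-dividend option value \[ V(u,\tau)=\begin{cases}(u-D)N(d(u))-Ke^{-r(T-\tau)}N\!\left(d(u)-\sigma\sqrt{T-\tau}\right), & u>D,\\ 0,& u\le D,\end{cases} \qquad d(u)=\frac{\log(u-D)-\log K+\left(r+\frac12\sigma^2\right)(T-\tau)}{\sigma\sqrt{T-\tau}}, \] and, for $u>D$, its derivative \[ V'(u,\tau)=N(d(u))+\frac{e^{-\frac12 d(u)^2}}{\sigma\sqrt{2\pi(T-\tau)}}-\frac{Ke^{-r(T-\tau)}e^{-\frac12\left(d(u)-\sigma\sqrt{T-\tau}\right)^2}}{\sigma\sqrt{2\pi(T-\tau)}\,(u-D)}. \] For $S>0$ let \[ V(S,0)=\frac{e^{-r\tau}}{\sigma\sqrt{2\pi\tau}}\int_{-\infty}^{\infty}V(e^{y},\tau)\exp\!\left[-\frac{(x-y)^2}{2\sigma^2\tau}\right]dy,\qquad x=\log S+\left(r-\frac{\sigma^2}{2}\right)\tau, \] which is the time-$0$ solution of the Black-Scholes equation $\frac{\partial V}{\partial t}+\frac12\sigma^2S^2\frac{\partial^2V}{\partial S^2}+rS\frac{\partial V}{\partial S}-rV=0$ with terminal condition $V(S,T)=\max\{0,S-K\}$, for a stock paying dividend $D$ at time $\tau$ (the option value being continuous across the dividend date while the stock price drops by $D$). Let $S^*>D$ be fixed and let $M\ge1$ be an integer. Set, for $i=0,\dots,M$,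 \[ S_i=D+\frac{S^*-D}{M}\,i,\qquad d_i=\frac{\log S-\log S_i+\left(r+\frac12\sigma^2\right)\tau}{\sigma\sqrt\tau},\qquad d^*=\frac{\log S-\log S^*+\left(r+\frac12\sigma^2\right)\tau}{\sigma\sqrt\tau}, \] and, for $i=1,\dots,M$, let $S_{i+\frac12}=\frac{S_{i-1}+S_i}{2}$ denote the midpoint of $[S_{i-1},S_i]$, \[ \alpha_i=\frac{M}{S^*-D}\left[V(S_i,\tau)-V(S_{i-1},\tau)\right],\quad A_i=N(d_{i-1})-N(d_i),\quad B_i=N(d_{i-1}-\sigma\sqrt\tau)-N(d_i-\sigma\sqrt\tau). \] Then $V^-_{S^*,M}(S,0)\le V(S,0)\le V^+_{S^*,M}(S,0)$, where \[ V^+_{S^*,M}(S,0)=\sum_{i=1}^M\left\{\alpha_iA_iS+e^{-r\tau}\left[V(S_{i-1},\tau)-\alpha_iS_{i-1}\right]B_i\right\}+SN(d^* )+e^{-r\tau}\left[V(S^*,\tau)-S^*\right]N(d^*-\sigma\sqrt\tau), \] \[ V^-_{S^*,M}(S,0)=S\sum_{i=1}^M V'\!\left(S_{i+\frac12},\tau\right)A_i+e^{-r\tau}\sum_{i=1}^M\left[V\!\left(S_{i+\frac12},\tau\right)-V'\!\left(S_{i+\frac12},\tau\right)S_{i+\frac12}\right]B_i+SN(d^* )-e^{-r\tau}\left(D+Ke^{-r(T-\tau)}\right)N(d^*-\sigma\sqrt\tau). \]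
   Context: Black-Scholes economy: the stock price follows a geometric Brownian motion with volatility $\sigma$ on $[0,\tau)$ and on $[\tau,T]$, jumping down by the known dividend $D$ at the known time $\tau$; $r$ is the constant risk-free rate; the European call has strike $K$ and maturity $T$. $V(u,\tau)$ is the option value at time $\tau$ just before the dividend as a function of the pre-dividend stock price $u$. The paper describes $S_{i+\frac12}$ as "the middle point of each interval $[S_{i-1},S_i]$". *)

theory Defs
  imports "HOL-Analysis.Analysis"
begin

definition normal_cdf :: "real \<Rightarrow> real" where
  "normal_cdf x = (LBINT t:{..x}. exp (- (t^2) / 2) / sqrt (2 * pi))"

definition d_pre :: "real \<Rightarrow> real \<Rightarrow> real \<Rightarrow> real \<Rightarrow> real \<Rightarrow> real \<Rightarrow> real \<Rightarrow> real" where
  "d_pre K D \<sigma> r T \<tau> u =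
     (ln (u - D) - ln K + (r + \<sigma>^2 / 2) * (T - \<tau>)) / (\<sigma> * sqrt (T - \<tau>))"

definition V_pre :: "real \<Rightarrow> real \<Rightarrow> real \<Rightarrow> real \<Rightarrow> real \<Rightarrow> real \<Rightarrow> real \<Rightarrow> real" where
  "V_pre K D \<sigma> r T \<tau> u =
     (if u > D then
        (u - D) * normal_cdf (d_pre K D \<sigma> r T \<tau> u)
        - K * exp (- r * (T - \<tau>)) * normal_cdf (d_pre K D \<sigma> r T \<tau> u - \<sigma> * sqrt (T - \<tau>))
      else 0)"

definition V_pre_deriv :: "real \<Rightarrow> real \<Rightarrow> real \<Rightarrow> real \<Rightarrow> real \<Rightarrow> real \<Rightarrow> real \<Rightarrow> real" where
  "V_pre_deriv K D \<sigma> r T \<tau> u =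
     normal_cdf (d_pre K D \<sigma> r T \<tau> u)
     + exp (- ((d_pre K D \<sigma> r T \<tau> u)^2) / 2) / (\<sigma> * sqrt (2 * pi * (T - \<tau>)))
     - K * exp (- r * (T - \<tau>)) * exp (- ((d_pre K D \<sigma> r T \<tau> u - \<sigma> * sqrt (T - \<tau>))^2) / 2)
       / (\<sigma> * sqrt (2 * pi * (T - \<tau>)) * (u - D))"

definition V_zero :: "real \<Rightarrow> real \<Rightarrow> real \<Rightarrow> real \<Rightarrow> real \<Rightarrow> real \<Rightarrow> real \<Rightarrow> real" where
  "V_zero K D \<sigma> r T \<tau> S =
     (let x = ln S + (r - \<sigma>^2 / 2) * \<tau> in
      exp (- r * \<tau>) / (\<sigma> * sqrt (2 * pi * \<tau>)) *
      (LBINT y. V_pre K D \<sigma> r T \<tau> (exp y) * exp (- ((x - y)^2) / (2 * \<sigma>^2 * \<tau>))))"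

definition grid_pt :: "real \<Rightarrow> real \<Rightarrow> nat \<Rightarrow> nat \<Rightarrow> real" where
  "grid_pt D Sstar M i = D + (Sstar - D) / real M * real i"

definition d_lvl :: "real \<Rightarrow> real \<Rightarrow> real \<Rightarrow> real \<Rightarrow> real \<Rightarrow> real" where
  "d_lvl \<sigma> r \<tau> S X = (ln S - ln X + (r + \<sigma>^2 / 2) * \<tau>) / (\<sigma> * sqrt \<tau>)"

definition V_upper :: "real \<Rightarrow> real \<Rightarrow> real \<Rightarrow> real \<Rightarrow> real \<Rightarrow> real \<Rightarrow> real \<Rightarrow> nat \<Rightarrow> real \<Rightarrow> real" where
  "V_upper K D \<sigma> r T \<tau> Sstar M S =
     (let Si = grid_pt D Sstar M;
          V = V_pre K D \<sigma> r T \<tau>;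
          d = d_lvl \<sigma> r \<tau> S;
          s = \<sigma> * sqrt \<tau>;
          \<alpha> = (\<lambda>i. real M / (Sstar - D) * (V (Si i) - V (Si (i - 1))));
          A = (\<lambda>i. normal_cdf (d (Si (i - 1))) - normal_cdf (d (Si i)));
          B = (\<lambda>i. normal_cdf (d (Si (i - 1)) - s) - normal_cdf (d (Si i) - s))
      in (\<Sum>i=1..M. \<alpha> i * A i * S + exp (- r * \<tau>) * (V (Si (i - 1)) - \<alpha> i * Si (i - 1)) * B i)
         + S * normal_cdf (d Sstar)
         + exp (- r * \<tau>) * (V Sstar - Sstar) * normal_cdf (d Sstar - s))"

definition V_lower :: "real \<Rightarrow> real \<Rightarrow> real \<Rightarrow> real \<Rightarrow> real \<Rightarrow> real \<Rightarrow> real \<Rightarrow> nat \<Rightarrow> real \<Rightarrow> real" where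
  "V_lower K D \<sigma> r T \<tau> Sstar M S =
     (let Si = grid_pt D Sstar M;
          V = V_pre K D \<sigma> r T \<tau>;
          V' = V_pre_deriv K D \<sigma> r T \<tau>;
          mid = (\<lambda>i. (Si (i - 1) + Si i) / 2);
          d = d_lvl \<sigma> r \<tau> S;
          s = \<sigma> * sqrt \<tau>;
          A = (\<lambda>i. normal_cdf (d (Si (i - 1))) - normal_cdf (d (Si i)));
          B = (\<lambda>i. normal_cdf (d (Si (i - 1)) - s) - normal_cdf (d (Si i) - s))
      in S * (\<Sum>i=1..M. V' (mid i) * A i)
         + exp (- r * \<tau>) * (\<Sum>i=1..M. (V (mid i) - V' (mid i) * mid i) * B i)
         + S * normal_cdf (d Sstar)
         - exp (- r * \<tau>) * (D + K * exp (- r * (T - \<tau>))) * normal_cdf (d Sstar - s))"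

end

theory Submission
  imports Defs "HOL-Probability.Distributions"
begin

lemma ndens_eq: "exp (- (t^2) / 2) / sqrt (2 * pi) = std_normal_density t"
  by (simp add: std_normal_density_def)

lemma ndens_integrable: "integrable lborel std_normal_density"
  using integrable_normal_density[of 1 0] by simp

lemma ndens_integral: "(\<integral>x. std_normal_density x \<partial>lborel) = 1"
  using integral_normal_density[of 1 0] by simp

lemma ndens_cont: "continuous_on A std_normal_density"
  unfolding std_normal_density_def by (intro continuous_intros) auto

lemma ncdf_lt: "normal_cdf x = (LBINT t:{..<x}. std_normal_density t)"
proof -
  have "normal_cdf x = (LBINT t:{..x}. std_normal_density t)"
    unfolding normal_cdf_def ndens_eq ..
  also have "\<dots> = (LBINT t:{..<x}. std_normal_density t)"
    by (rule set_integral_cong_set) (auto simp: set_borel_measurable_def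
        intro!: eventually_mono[OF AE_lborel_singleton[of x]])
  finally show ?thesis .
qed

lemma ncdf_interval: "normal_cdf x = (LBINT t=-\<infinity>..ereal x. std_normal_density t)"
  unfolding ncdf_lt by (simp add: interval_lebesgue_integral_def)

lemma ndens_interval_integrable: "interval_lebesgue_integrable lborel a b std_normal_density"
  unfolding interval_lebesgue_integrable_def set_integrable_def
  using integrable_mult_indicator[OF _ ndens_integrable, of "einterval a b"]
    integrable_mult_indicator[OF _ ndens_integrable, of "einterval b a"] by auto

lemma ncdf_deriv: "(normal_cdf has_real_derivative std_normal_density x) (at x)"
proof -
  have eq: "normal_cdf u = normal_cdf 0 + (LBINT t=ereal 0..ereal u. std_normal_density t)" for u
  proof -
    have "(LBINT t=-\<infinity>..ereal 0. std_normal_density t) + (LBINT t=ereal 0..ereal u. std_normal_density t)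
         = (LBINT t=-\<infinity>..ereal u. std_normal_density t)"
      by (rule interval_integral_sum) (rule ndens_interval_integrable)
    then show ?thesis unfolding ncdf_interval by (simp add: zero_ereal_def)
  qed
  have "((\<lambda>u. LBINT y=ereal 0..ereal u. std_normal_density y) has_vector_derivative std_normal_density x)
        (at x within {min x 0 - 1..max x 0 + 1})"
    by (rule interval_integral_FTC2) (auto intro: ndens_cont)
  then have "((\<lambda>u. LBINT y=ereal 0..ereal u. std_normal_density y) has_vector_derivative std_normal_density x) (at x)"
    by (subst (asm) at_within_interior) (auto simp: interior_atLeastAtMost_real)
  then have "((\<lambda>u. normal_cdf 0 + (LBINT y=ereal 0..ereal u. std_normal_density y)) has_real_derivative std_normal_density x) (at x)"
    by (auto simp: has_real_derivative_iff_has_vector_derivative intro!: derivative_eq_intros)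
  moreover have feq: "normal_cdf = (\<lambda>u. normal_cdf 0 + (LBINT y=ereal 0..ereal u. std_normal_density y))"
    by (rule ext) (rule eq)
  ultimately show ?thesis by (simp only: feq[symmetric])
qed

lemma ncdf_cont[continuous_intros]: "isCont normal_cdf x"
  using ncdf_deriv DERIV_isCont by blast

lemma ncdf_measurable[measurable]: "normal_cdf \<in> borel_measurable borel"
  by (intro borel_measurable_continuous_onI continuous_at_imp_continuous_on) (auto intro: ncdf_cont)

lemma ncdf_mono: "x \<le> y \<Longrightarrow> normal_cdf x \<le> normal_cdf y"
  by (rule DERIV_nonneg_imp_nondecreasing[of x y normal_cdf]) (auto intro: ncdf_deriv)


lemma GL_tail:
  fixes s m t :: real
  assumes s: "s > 0"
  shows "set_integrable lborel {t<..} (\<lambda>y. exp (-((m - y) ^ 2) / (2 * s ^ 2)))"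
    and "(LBINT y:{t<..}. exp (-((m - y) ^ 2) / (2 * s ^ 2))) = s * sqrt (2*pi) * normal_cdf ((m - t)/s)"
proof -
  define f where "f y = indicator {t<..} y * exp (-((m - y) ^ 2) / (2 * s ^ 2))" for y :: real
  have pt: "f (m + (-s) * z) = sqrt (2*pi) * (indicator {..<(m - t)/s} z * std_normal_density z)" for z
  proof -
    have i: "indicator {t<..} (m + (-s) * z) = (indicator {..<(m - t)/s} z :: real)"
      using s by (auto simp: indicator_def pos_less_divide_eq algebra_simps)
    have e: "-((m - (m + (-s) * z))^2) / (2 * s ^ 2) = -(z ^ 2) / 2"
      using s by (simp add: power_mult_distrib field_simps)
    show ?thesis unfolding f_def i e std_normal_density_def by simp
  qed
  have int1: "integrable lborel (\<lambda>z. indicator {..<(m - t)/s} z * std_normal_density z)"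
    using integrable_mult_indicator[OF _ ndens_integrable, of "{..<(m - t)/s}"] by simp
  have int2: "integrable lborel (\<lambda>z. f (m + (-s) * z))"
    unfolding pt using int1 by simp
  have "integrable lborel f"
    using int2 lborel_integrable_real_affine_iff[of "-s" f m] s by simp
  then show "set_integrable lborel {t<..} (\<lambda>y. exp (-((m - y) ^ 2) / (2 * s ^ 2)))"
    unfolding set_integrable_def f_def by simp
  have "(LBINT y:{t<..}. exp (-((m - y) ^ 2) / (2 * s ^ 2))) = integral\<^sup>L lborel f"
    unfolding set_lebesgue_integral_def f_def by simp
  also have "\<dots> = \<bar>-s\<bar> *\<^sub>R integral\<^sup>L lborel (\<lambda>z. f (m + (-s) * z))"
    by (rule lborel_integral_real_affine) (use s in simp)
  also have "\<dots> = s * (sqrt (2*pi) * normal_cdf ((m - t)/s))"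
    unfolding pt ncdf_lt set_lebesgue_integral_def using s by simp
  finally show "(LBINT y:{t<..}. exp (-((m - y) ^ 2) / (2 * s ^ 2))) = s * sqrt (2*pi) * normal_cdf ((m - t)/s)"
    by simp
qed

lemma ncdf_sym: "normal_cdf (-x) = 1 - normal_cdf x"
proof -
  have A: "set_integrable lborel {x<..} std_normal_density"
    unfolding set_integrable_def using integrable_mult_indicator[OF _ ndens_integrable, of "{x<..}"] by simp
  have B: "set_integrable lborel {..x} std_normal_density"
    unfolding set_integrable_def using integrable_mult_indicator[OF _ ndens_integrable, of "{..x}"] by simp
  have "(LBINT y:{..x} \<union> {x<..}. std_normal_density y) = (LBINT y:{..x}. std_normal_density y) + (LBINT y:{x<..}. std_normal_density y)"
    by (rule set_integral_Un) (use A B in auto)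
  moreover have "{..x} \<union> {x<..} = UNIV" by auto
  moreover have "(LBINT y:UNIV. std_normal_density y) = 1"
    using ndens_integral by (simp add: set_lebesgue_integral_def)
  moreover have "(LBINT y:{..x}. std_normal_density y) = normal_cdf x"
    unfolding normal_cdf_def ndens_eq ..
  moreover have "(LBINT y:{x<..}. std_normal_density y) = normal_cdf (-x)"
  proof -
    have "(LBINT y:{x<..}. std_normal_density y) = (LBINT y:{x<..}. exp (-((0 - y)^2) / (2 * 1 ^ 2))) / sqrt (2*pi)"
      by (simp add: std_normal_density_def set_integral_divide_zero)
    also have "\<dots> = normal_cdf (-x)"
      using GL_tail(2)[where s=1 and m=0 and t=x] by simp
    finally show ?thesis .
  qed
  ultimately show ?thesis by simp
qed

lemma ncdf_nonneg: "normal_cdf x \<ge> 0"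
  unfolding ncdf_lt set_lebesgue_integral_def by (rule Bochner_Integration.integral_nonneg) (auto simp: indicator_def)

lemma ncdf_le1: "normal_cdf x \<le> 1"
  using ncdf_sym[of "-x"] ncdf_nonneg[of "-x"] by simp


definition gk :: "real \<Rightarrow> real \<Rightarrow> real \<Rightarrow> real" where
  "gk m s y = exp (-((m - y) ^ 2) / (2 * s ^ 2))"

definition I0 :: "real \<Rightarrow> real \<Rightarrow> real \<Rightarrow> real" where
  "I0 m s t = s * sqrt (2*pi) * normal_cdf ((m - t)/s)"

definition I1 :: "real \<Rightarrow> real \<Rightarrow> real \<Rightarrow> real" where
  "I1 m s t = exp (m + s ^ 2 / 2) * (s * sqrt (2*pi) * normal_cdf ((m + s ^ 2 - t)/s))"

lemma gk_nonneg: "gk m s y \<ge> 0" by (simp add: gk_def)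

lemma gk_measurable[measurable]: "gk m s \<in> borel_measurable borel"
  unfolding gk_def[abs_def] by measurable

lemma T0:
  assumes s: "s > 0"
  shows "integrable lborel (\<lambda>y. indicator {t<..} y * gk m s y)"
    and "integral\<^sup>L lborel (\<lambda>y. indicator {t<..} y * gk m s y) = I0 m s t"
  using GL_tail[OF s, of t m] unfolding set_integrable_def set_lebesgue_integral_def gk_def I0_def
  by simp_all

lemma exp_gk: "s > 0 \<Longrightarrow> exp y * gk m s y = exp (m + s ^ 2 / 2) * gk (m + s ^ 2) s y"
  unfolding gk_def
proof -
  assume s: "s > 0"
  have "y + -((m - y) ^ 2) / (2 * s ^ 2) = (m + s ^ 2 / 2) + -((m + s ^ 2 - y) ^ 2) / (2 * s ^ 2)"
    using s by (simp add: field_simps power2_eq_square)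
  then show "exp y * exp (-((m - y) ^ 2) / (2 * s ^ 2)) = exp (m + s ^ 2 / 2) * exp (-((m + s ^ 2 - y) ^ 2) / (2 * s ^ 2))"
    by (simp add: exp_add[symmetric])
qed

lemma T1:
  assumes s: "s > 0"
  shows "integrable lborel (\<lambda>y. indicator {t<..} y * (exp y * gk m s y))"
    and "integral\<^sup>L lborel (\<lambda>y. indicator {t<..} y * (exp y * gk m s y)) = I1 m s t"
proof -
  have eq: "(\<lambda>y. indicator {t<..} y * (exp y * gk m s y)) = (\<lambda>y. exp (m + s ^ 2 / 2) * (indicator {t<..} y * gk (m + s ^ 2) s y))"
    using exp_gk[OF s] by (auto simp: fun_eq_iff)
  show "integrable lborel (\<lambda>y. indicator {t<..} y * (exp y * gk m s y))"
    unfolding eq using T0(1)[OF s, of t "m + s ^ 2"] by simp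
  show "integral\<^sup>L lborel (\<lambda>y. indicator {t<..} y * (exp y * gk m s y)) = I1 m s t"
    unfolding eq using T0(2)[OF s, of t "m + s ^ 2"] by (simp add: I0_def I1_def)
qed

lemma exp_less_iff_ln: "0 < (a::real) \<Longrightarrow> a < exp y \<longleftrightarrow> ln a < y"
  using ln_less_cancel_iff[of a "exp y"] by simp

lemma exp_le_iff_ln: "0 < (a::real) \<Longrightarrow> exp y \<le> a \<longleftrightarrow> y \<le> ln a"
  using ln_le_cancel_iff[of "exp y" a] by simp

lemma piece_tail:
  assumes s: "s > 0" and b: "0 < b"
  shows "integrable lborel (\<lambda>y. if b < exp y then (p * exp y + q) * gk m s y else 0)"
    and "integral\<^sup>L lborel (\<lambda>y. if b < exp y then (p * exp y + q) * gk m s y else 0)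
         = p * I1 m s (ln b) + q * I0 m s (ln b)"
proof -
  have eq: "(\<lambda>y. if b < exp y then (p * exp y + q) * gk m s y else 0) =
     (\<lambda>y. p * (indicator {ln b<..} y * (exp y * gk m s y)) + q * (indicator {ln b<..} y * gk m s y))"
  proof (rule ext)
    fix y
    show "(if b < exp y then (p * exp y + q) * gk m s y else 0) =
       p * (indicator {ln b<..} y * (exp y * gk m s y)) + q * (indicator {ln b<..} y * gk m s y)"
    proof (cases "ln b < y")
      case True
      then have "b < exp y" using exp_less_iff_ln[OF b] by blast
      then show ?thesis using True by (simp add: distrib_right)
    next
      case False
      then have "\<not> b < exp y" using exp_less_iff_ln[OF b] by blast
      then show ?thesis using False by simp
    qed
  qed
  note i = T0[OF s, of "ln b" m] T1[OF s, of "ln b" m]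
  have intA: "integrable lborel (\<lambda>y. p * (indicator {ln b<..} y * (exp y * gk m s y)))"
    by (rule Bochner_Integration.integrable_mult_right) (rule i(3))
  have intB: "integrable lborel (\<lambda>y. q * (indicator {ln b<..} y * gk m s y))"
    by (rule Bochner_Integration.integrable_mult_right) (rule i(1))
  show "integrable lborel (\<lambda>y. if b < exp y then (p * exp y + q) * gk m s y else 0)"
    unfolding eq by (rule Bochner_Integration.integrable_add[OF intA intB])
  show "integral\<^sup>L lborel (\<lambda>y. if b < exp y then (p * exp y + q) * gk m s y else 0)
         = p * I1 m s (ln b) + q * I0 m s (ln b)"
    unfolding eq Bochner_Integration.integral_add[OF intA intB] by (simp only: integral_mult_right_zero i(2) i(4))
qed

lemma piece_mid:
  assumes s: "s > 0" and a: "0 < a" and ab: "a \<le> b"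
  shows "integrable lborel (\<lambda>y. if a < exp y \<and> exp y \<le> b then (p * exp y + q) * gk m s y else 0)"
    and "integral\<^sup>L lborel (\<lambda>y. if a < exp y \<and> exp y \<le> b then (p * exp y + q) * gk m s y else 0)
         = p * (I1 m s (ln a) - I1 m s (ln b)) + q * (I0 m s (ln a) - I0 m s (ln b))"
proof -
  have b: "0 < b" using a ab by simp
  have eq: "(\<lambda>y. if a < exp y \<and> exp y \<le> b then (p * exp y + q) * gk m s y else 0) =
     (\<lambda>y. (if a < exp y then (p * exp y + q) * gk m s y else 0) - (if b < exp y then (p * exp y + q) * gk m s y else 0))"
    using ab by (intro ext) simp
  note i = piece_tail[OF s a, of p q m] piece_tail[OF s b, of p q m]
  show "integrable lborel (\<lambda>y. if a < exp y \<and> exp y \<le> b then (p * exp y + q) * gk m s y else 0)"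
    unfolding eq using i by auto
  show "integral\<^sup>L lborel (\<lambda>y. if a < exp y \<and> exp y \<le> b then (p * exp y + q) * gk m s y else 0)
         = p * (I1 m s (ln a) - I1 m s (ln b)) + q * (I0 m s (ln a) - I0 m s (ln b))"
    unfolding eq using i by (simp add: algebra_simps)
qed

lemma put_ineq:
  assumes a: "a \<ge> 0"
  shows "exp (a * d - a ^ 2 / 2) * normal_cdf (- d) \<le> normal_cdf (a - d)"
proof -
  have s1: "(1::real) > 0" by simp
  have A: "(LBINT y:{d<..}. exp (-((0 - y) ^ 2) / (2 * 1 ^ 2))) = sqrt (2*pi) * normal_cdf (-d)"
    using GL_tail(2)[OF s1, of d 0] by simp
  have B: "(LBINT y:{d<..}. exp (-((a - y) ^ 2) / (2 * 1 ^ 2))) = sqrt (2*pi) * normal_cdf (a - d)"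
    using GL_tail(2)[OF s1, of d a] by simp
  have "(LBINT y:{d<..}. exp (a * d - a ^ 2 / 2) * exp (-((0 - y) ^ 2) / (2 * 1 ^ 2)))
        \<le> (LBINT y:{d<..}. exp (-((a - y) ^ 2) / (2 * 1 ^ 2)))"
  proof (rule set_integral_mono)
    show "set_integrable lborel {d<..} (\<lambda>y. exp (a * d - a ^ 2 / 2) * exp (-((0 - y) ^ 2) / (2 * 1 ^ 2)))"
      using GL_tail(1)[OF s1, of d 0] by simp
    show "set_integrable lborel {d<..} (\<lambda>y. exp (-((a - y) ^ 2) / (2 * 1 ^ 2)))"
      using GL_tail(1)[OF s1, of d a] by simp
    fix y assume "y \<in> {d<..}"
    then have "a * d \<le> a * y" using a by (simp add: mult_left_mono)
    then have "a * d - a ^ 2 / 2 + -((0 - y) ^ 2) / (2 * 1 ^ 2) \<le> -((a - y) ^ 2) / (2 * 1 ^ 2)"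
      by (simp add: power2_eq_square algebra_simps)
    then show "exp (a * d - a ^ 2 / 2) * exp (-((0 - y) ^ 2) / (2 * 1 ^ 2)) \<le> exp (-((a - y) ^ 2) / (2 * 1 ^ 2))"
      by (simp add: exp_add[symmetric])
  qed
  then have "exp (a * d - a ^ 2 / 2) * (sqrt (2*pi) * normal_cdf (-d)) \<le> sqrt (2*pi) * normal_cdf (a - d)"
    using A B by simp
  then show ?thesis by (simp add: mult.left_commute)
qed


context
  fixes K D \<sigma> r T \<tau> :: real
  assumes K: "K > 0" and sig: "\<sigma> > 0" and tT: "\<tau> < T"
begin

abbreviation "dd \<equiv> d_pre K D \<sigma> r T \<tau>"
abbreviation "VV \<equiv> V_pre K D \<sigma> r T \<tau>"

lemma sp_pos: "\<sigma> * sqrt (T - \<tau>) > 0"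
  using sig tT by simp

lemma E_rel:
  assumes u: "u > D"
  shows "u - D = K * exp (- r * (T - \<tau>)) * exp (\<sigma> * sqrt (T - \<tau>) * dd u - (\<sigma> * sqrt (T - \<tau>)) ^ 2 / 2)"
proof -
  define h where "h = T - \<tau>"
  have h: "h > 0" using tT by (simp add: h_def)
  have s: "\<sigma> * sqrt h > 0" using sig h by simp
  have ds: "\<sigma> * sqrt h * dd u = ln (u - D) - ln K + (r + \<sigma>^2/2) * h"
    using h sig unfolding d_pre_def h_def[symmetric] by simp
  have ss: "(\<sigma> * sqrt h) ^ 2 = \<sigma>^2 * h"
    using h by (simp add: power_mult_distrib)
  have ex: "\<sigma> * sqrt h * dd u - (\<sigma> * sqrt h) ^ 2 / 2 = ln (u - D) - ln K + r * h"
    unfolding ds ss by (simp add: algebra_simps)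
  have "exp (ln (u - D) - ln K + r * h) = (u - D) / K * exp (r * h)"
    using u K by (simp add: exp_add exp_diff)
  then have "K * exp (- r * h) * exp (\<sigma> * sqrt h * dd u - (\<sigma> * sqrt h) ^ 2 / 2) = (u - D) * (exp (- r * h) * exp (r * h))"
    unfolding ex using K by simp
  also have "exp (- r * h) * exp (r * h) = 1" by (simp add: exp_add[symmetric])
  finally show ?thesis unfolding h_def by simp
qed

lemma id_rel:
  assumes u: "u > D"
  shows "K * exp (- r * (T - \<tau>)) * exp (- ((dd u - \<sigma> * sqrt (T - \<tau>)) ^ 2) / 2) = (u - D) * exp (- ((dd u) ^ 2) / 2)"
proof -
  define s where "s = \<sigma> * sqrt (T - \<tau>)"
  define d where "d = dd u"
  have e: "- ((d - s) ^ 2) / 2 = (s * d - s ^ 2 / 2) + (- (d ^ 2) / 2)"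
    by (simp add: power2_eq_square field_simps)
  have "exp (- ((d - s) ^ 2) / 2) = exp (s * d - s ^ 2 / 2) * exp (- (d ^ 2) / 2)"
    unfolding e by (rule exp_add)
  then show ?thesis using E_rel[OF u] unfolding s_def[symmetric] d_def[symmetric]
    by (simp add: mult.assoc)
qed

lemma Vderiv_eq:
  assumes u: "u > D"
  shows "V_pre_deriv K D \<sigma> r T \<tau> u = normal_cdf (dd u)"
proof -
  define c where "c = \<sigma> * sqrt (2 * pi * (T - \<tau>))"
  have c: "c > 0" using sig tT by (simp add: c_def)
  have "K * exp (- r * (T - \<tau>)) * exp (- ((dd u - \<sigma> * sqrt (T - \<tau>)) ^ 2) / 2) / (c * (u - D))
      = exp (- ((dd u) ^ 2) / 2) / c"
    unfolding id_rel[OF u] using u c by simp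
  then show ?thesis unfolding V_pre_deriv_def c_def[symmetric] by simp
qed

lemma dd_deriv:
  assumes u: "u > D"
  shows "(dd has_real_derivative 1 / ((u - D) * (\<sigma> * sqrt (T - \<tau>)))) (at u)"
proof -
  have "((\<lambda>u. (ln (u - D) - ln K + (r + \<sigma>^2 / 2) * (T - \<tau>)) / (\<sigma> * sqrt (T - \<tau>))) has_real_derivative
        (1 / (u - D) * (1 - 0) - 0 + 0) / (\<sigma> * sqrt (T - \<tau>))) (at u)"
  proof -
    have l: "((\<lambda>u. ln (u - D)) has_real_derivative 1 / (u - D) * (1 - 0)) (at u)"
      using DERIV_chain'[OF DERIV_diff[OF DERIV_ident DERIV_const], of ln "1 / (u - D)"] u
        DERIV_ln_divide[of "u - D"] by simp
    show ?thesis
      by (intro DERIV_cdivide DERIV_add DERIV_diff l DERIV_const)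
  qed
  then show ?thesis unfolding d_pre_def[abs_def] by simp
qed

lemma V_deriv:
  assumes u: "u > D"
  shows "(VV has_real_derivative normal_cdf (dd u)) (at u)"
proof -
  define s where "s = \<sigma> * sqrt (T - \<tau>)"
  define Kp where "Kp = K * exp (- r * (T - \<tau>))"
  define e where "e = 1 / ((u - D) * s)"
  have s: "s > 0" using sp_pos by (simp add: s_def)
  have d1: "(dd has_real_derivative e) (at u)" using dd_deriv[OF u] by (simp add: e_def s_def)
  have n1: "((\<lambda>u. normal_cdf (dd u)) has_real_derivative std_normal_density (dd u) * e) (at u)"
    by (rule DERIV_chain'[OF d1 ncdf_deriv])
  have d2: "((\<lambda>u. dd u - s) has_real_derivative e - 0) (at u)"
    by (intro DERIV_diff d1 DERIV_const)
  have n2: "((\<lambda>u. normal_cdf (dd u - s)) has_real_derivative std_normal_density (dd u - s) * (e - 0)) (at u)"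
    by (rule DERIV_chain'[OF d2 ncdf_deriv])
  have F: "((\<lambda>u. (u - D) * normal_cdf (dd u) - Kp * normal_cdf (dd u - s)) has_real_derivative
      ((1 - 0) * normal_cdf (dd u) + (std_normal_density (dd u) * e) * (u - D)) - Kp * (std_normal_density (dd u - s) * (e - 0))) (at u)"
    by (intro DERIV_diff DERIV_mult DERIV_cmult n1 n2 DERIV_ident DERIV_const)
  have idr: "Kp * std_normal_density (dd u - s) = (u - D) * std_normal_density (dd u)"
    using id_rel[OF u] unfolding Kp_def s_def std_normal_density_def
    by (simp add: mult.commute mult.left_commute)
  have "((1 - 0) * normal_cdf (dd u) + (std_normal_density (dd u) * e) * (u - D)) - Kp * (std_normal_density (dd u - s) * (e - 0))
        = normal_cdf (dd u) + e * ((u - D) * std_normal_density (dd u) - Kp * std_normal_density (dd u - s))"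
    by (simp add: algebra_simps)
  also have "\<dots> = normal_cdf (dd u)" using idr by simp
  finally have "((1 - 0) * normal_cdf (dd u) + (std_normal_density (dd u) * e) * (u - D)) - Kp * (std_normal_density (dd u - s) * (e - 0))
        = normal_cdf (dd u)" .
  with F have F': "((\<lambda>u. (u - D) * normal_cdf (dd u) - Kp * normal_cdf (dd u - s)) has_real_derivative normal_cdf (dd u)) (at u)"
    by (rule DERIV_cong)
  show ?thesis
    by (rule has_field_derivative_transform_within_open[OF F', of "{D<..}"])
       (use u in \<open>auto simp: V_pre_def Kp_def s_def\<close>)
qed

lemma dd_mono: "D < x \<Longrightarrow> x \<le> y \<Longrightarrow> dd x \<le> dd y"
  unfolding d_pre_def using sp_pos
  by (intro divide_right_mono) auto

lemma V_convex: "convex_on {D<..} VV"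
  by (rule convex_on_realI[where f'="\<lambda>u. normal_cdf (dd u)"])
     (auto intro: V_deriv ncdf_mono dd_mono)

lemma V_le: "u > D \<Longrightarrow> VV u \<le> u - D"
proof -
  assume u: "u > D"
  have "(u - D) * normal_cdf (dd u) \<le> u - D"
    using mult_left_mono[OF ncdf_le1[of "dd u"], of "u - D"] u by simp
  moreover have "0 \<le> K * exp (- r * (T - \<tau>)) * normal_cdf (dd u - \<sigma> * sqrt (T - \<tau>))"
    using K ncdf_nonneg by simp
  moreover have "VV u = (u - D) * normal_cdf (dd u) - K * exp (- r * (T - \<tau>)) * normal_cdf (dd u - \<sigma> * sqrt (T - \<tau>))"
    using u by (simp add: V_pre_def)
  ultimately show ?thesis by linarith
qed

lemma V_tail_lower: "u > D \<Longrightarrow> u - D - K * exp (- r * (T - \<tau>)) \<le> VV u"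
proof -
  assume u: "u > D"
  define s where "s = \<sigma> * sqrt (T - \<tau>)"
  define Kp where "Kp = K * exp (- r * (T - \<tau>))"
  define d where "d = dd u"
  have s: "s > 0" using sp_pos by (simp add: s_def)
  have Kp: "Kp > 0" using K by (simp add: Kp_def)
  have E: "u - D = Kp * exp (s * d - s ^ 2 / 2)" using E_rel[OF u] by (simp add: s_def Kp_def d_def)
  have P: "exp (s * d - s ^ 2 / 2) * normal_cdf (- d) \<le> normal_cdf (s - d)"
    using put_ineq[of s d] s by simp
  have sym2: "normal_cdf (s - d) = 1 - normal_cdf (d - s)"
    using ncdf_sym[of "d - s"] by simp
  have v: "VV u = (u - D) * normal_cdf d - Kp * normal_cdf (d - s)"
    using u by (simp add: V_pre_def s_def Kp_def d_def)
  have "VV u - (u - D - Kp) = Kp * normal_cdf (s - d) - (u - D) * normal_cdf (- d)"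
    unfolding v ncdf_sym sym2 by (simp add: algebra_simps)
  also have "\<dots> = Kp * (normal_cdf (s - d) - exp (s * d - s ^ 2 / 2) * normal_cdf (- d))"
    unfolding E by (simp add: algebra_simps)
  also have "\<dots> \<ge> 0" using P Kp by simp
  finally show ?thesis unfolding Kp_def by simp
qed

lemma V_tail_upper:
  assumes "D < a" "a \<le> u"
  shows "VV u - u \<le> VV a - a"
proof -
  have "(\<lambda>z. VV z - z) a \<ge> (\<lambda>z. VV z - z) u"
  proof (rule DERIV_nonpos_imp_nonincreasing[OF assms(2)])
    fix x assume "a \<le> x" "x \<le> u"
    then have x: "x > D" using assms by simp
    show "\<exists>y. ((\<lambda>z. VV z - z) has_real_derivative y) (at x) \<and> y \<le> 0"
      using DERIV_diff[OF V_deriv[OF x] DERIV_ident] ncdf_le1 by auto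
  qed
  then show ?thesis by simp
qed

lemma V_chord:
  assumes "D < a" "a \<le> u" "u \<le> b"
  shows "VV u \<le> (VV b - VV a) / (b - a) * (u - a) + VV a"
proof -
  have "convex_on {a..b} VV"
    by (rule convex_on_subset[OF V_convex]) (use assms in auto)
  then show ?thesis using convex_onD_Icc'[of a b VV u] assms by simp
qed

lemma V_tangent:
  assumes "D < m" "D < u"
  shows "VV m + normal_cdf (dd m) * (u - m) \<le> VV u"
proof -
  have "VV u - VV m \<ge> normal_cdf (dd m) * (u - m)"
    by (rule convex_on_imp_above_tangent[OF V_convex, of m u])
       (use assms in \<open>auto simp: interior_open intro: has_field_derivative_at_within V_deriv\<close>)
  then show ?thesis by simp
qed

lemma V_chordD:
  assumes u: "D < u" and b: "u \<le> b"
  shows "VV u \<le> VV b / (b - D) * (u - D)"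
proof (cases "u = b")
  case True then show ?thesis using u by simp
next
  case False
  with b have ub: "u < b" by simp
  define R where "R a = (a - D) * (b - u) / (b - a) + VV b * (u - a) / (b - a)" for a
  have lim: "(R \<longlongrightarrow> R D) (at_right D)"
    unfolding R_def using u ub by (intro tendsto_intros) auto
  have ev: "eventually (\<lambda>a. VV u \<le> R a) (at_right D)"
    using eventually_at_right_real[OF u]
  proof (rule eventually_mono)
    fix a assume a: "a \<in> {D<..<u}"
    have ch: "VV u \<le> (VV b - VV a) / (b - a) * (u - a) + VV a"
      using V_chord[of a u b] a ub by simp
    have "(VV b - VV a) / (b - a) * (u - a) + VV a = VV a * (b - u) / (b - a) + VV b * (u - a) / (b - a)"
    proof -
      have ne: "b - a \<noteq> 0" using a ub by simp
      have "(VV b - VV a) / (b - a) * (u - a) + VV a = ((VV b - VV a) * (u - a) + VV a * (b - a)) / (b - a)"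
        using ne by (simp add: add_divide_distrib)
      also have "\<dots> = (VV a * (b - u) + VV b * (u - a)) / (b - a)" by (simp add: algebra_simps)
      finally show ?thesis by (simp add: add_divide_distrib)
    qed
    also have "\<dots> \<le> (a - D) * (b - u) / (b - a) + VV b * (u - a) / (b - a)"
      using V_le[of a] a ub by (intro add_right_mono divide_right_mono mult_right_mono) auto
    finally show "VV u \<le> R a" using ch unfolding R_def by simp
  qed
  have "VV u \<le> R D"
    by (rule tendsto_lowerbound[OF lim ev]) simp
  then show ?thesis unfolding R_def by simp
qed

end


lemma grid_cases:
  fixes D Sstar u :: real and M :: nat
  assumes DS: "D < Sstar" and M: "M \<ge> 1"
  shows "u \<le> D \<or> Sstar < u \<Longrightarrow> i \<in> {1..M} \<Longrightarrow>
           \<not> (grid_pt D Sstar M (i - 1) < u \<and> u \<le> grid_pt D Sstar M i)"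
    and "D < u \<Longrightarrow> u \<le> Sstar \<Longrightarrow> \<exists>k\<in>{1..M}. grid_pt D Sstar M (k - 1) < u \<and> u \<le> grid_pt D Sstar M k \<and>
           (\<forall>i\<in>{1..M}. grid_pt D Sstar M (i - 1) < u \<and> u \<le> grid_pt D Sstar M i \<longrightarrow> i = k)"
proof -
  define c0 where "c0 = (Sstar - D) / real M"
  have c0: "c0 > 0" using DS M by (simp add: c0_def)
  have cM: "c0 * real M = Sstar - D" using M by (simp add: c0_def)
  have Si: "grid_pt D Sstar M j = D + c0 * real j" for j
    by (simp add: grid_pt_def c0_def)
  {
    assume u: "u \<le> D \<or> Sstar < u" and i: "i \<in> {1..M}"
    have "D \<le> grid_pt D Sstar M (i - 1)" unfolding Si using c0 by simp
    moreover have "grid_pt D Sstar M i \<le> Sstar"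
    proof -
      have "c0 * real i \<le> c0 * real M" using i c0 by (intro mult_left_mono) auto
      then show ?thesis unfolding Si using cM by simp
    qed
    ultimately show "\<not> (grid_pt D Sstar M (i - 1) < u \<and> u \<le> grid_pt D Sstar M i)"
      using u by linarith
  }
  {
    assume u1: "D < u" and u2: "u \<le> Sstar"
    define t where "t = (u - D) / c0"
    have t0: "t > 0" using u1 c0 by (simp add: t_def)
    have tM: "t \<le> real M"
      unfolding t_def using c0 u2 cM by (simp add: pos_divide_le_eq mult.commute)
    have cond: "(grid_pt D Sstar M (i - 1) < u \<and> u \<le> grid_pt D Sstar M i) \<longleftrightarrow> \<lceil>t\<rceil> = int i"
      if i: "i \<ge> 1" for i
    proof -
      have r: "real (i - 1) = real i - 1" using i by simp
      have "grid_pt D Sstar M (i - 1) < u \<longleftrightarrow> real i - 1 < t"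
      proof -
        have "grid_pt D Sstar M (i - 1) < u \<longleftrightarrow> c0 * (real i - 1) < u - D"
          unfolding Si r by linarith
        also have "\<dots> \<longleftrightarrow> real i - 1 < t"
          unfolding t_def using c0 by (simp add: pos_less_divide_eq mult.commute)
        finally show ?thesis .
      qed
      moreover have "u \<le> grid_pt D Sstar M i \<longleftrightarrow> t \<le> real i"
      proof -
        have "u \<le> grid_pt D Sstar M i \<longleftrightarrow> u - D \<le> c0 * real i"
          unfolding Si by linarith
        also have "\<dots> \<longleftrightarrow> t \<le> real i"
          unfolding t_def using c0 by (simp add: pos_divide_le_eq mult.commute)
        finally show ?thesis .
      qed
      moreover have "\<lceil>t\<rceil> = int i \<longleftrightarrow> real i - 1 < t \<and> t \<le> real i"
        by (simp add: ceiling_eq_iff)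
      ultimately show ?thesis by blast
    qed
    define k where "k = nat \<lceil>t\<rceil>"
    have k1: "\<lceil>t\<rceil> \<ge> 1" using t0 by simp
    have kM: "\<lceil>t\<rceil> \<le> int M" using tM by (simp add: ceiling_le_iff)
    have kk: "\<lceil>t\<rceil> = int k" using k1 by (simp add: k_def)
    have kr: "k \<in> {1..M}" using k1 kM kk by auto
    show "\<exists>k\<in>{1..M}. grid_pt D Sstar M (k - 1) < u \<and> u \<le> grid_pt D Sstar M k \<and>
           (\<forall>i\<in>{1..M}. grid_pt D Sstar M (i - 1) < u \<and> u \<le> grid_pt D Sstar M i \<longrightarrow> i = k)"
    proof (intro bexI[OF _ kr] conjI ballI impI)
      show "grid_pt D Sstar M (k - 1) < u" "u \<le> grid_pt D Sstar M k"
        using cond[of k] kr kk by auto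
    next
      fix i assume "i \<in> {1..M}" "grid_pt D Sstar M (i - 1) < u \<and> u \<le> grid_pt D Sstar M i"
      then have "\<lceil>t\<rceil> = int i" using cond[of i] by auto
      then show "i = k" using kk by simp
    qed
  }
qed

lemma sum_single:
  fixes h :: "nat \<Rightarrow> real"
  assumes k: "k \<in> A" and fin: "finite A" and u: "\<forall>i\<in>A. P i \<longrightarrow> i = k" and Pk: "P k"
  shows "(\<Sum>i\<in>A. if P i then h i else 0) = h k"
proof -
  have "(\<Sum>i\<in>A. if P i then h i else 0) = (\<Sum>i\<in>A. if i = k then h i else 0)"
  proof (rule sum.cong[OF refl])
    fix i assume i: "i \<in> A"
    show "(if P i then h i else 0) = (if i = k then h i else 0)"
    proof (cases "i = k")
      case True then show ?thesis using Pk by simp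
    next
      case False then have "\<not> P i" using u i by blast
      then show ?thesis using False by simp
    qed
  qed
  also have "\<dots> = h k" using k fin by (simp add: sum.delta)
  finally show ?thesis .
qed

lemma sum_none:
  fixes h :: "nat \<Rightarrow> real"
  assumes "\<forall>i\<in>A. \<not> P i"
  shows "(\<Sum>i\<in>A. if P i then h i else 0) = 0"
  using assms by (intro sum.neutral) auto


lemma chord_all:
  assumes K: "K > 0" and sig: "\<sigma> > 0" and tT: "\<tau> < T"
    and a: "D \<le> a" and au: "a < u" and ub: "u \<le> b"
  shows "V_pre K D \<sigma> r T \<tau> u \<le> (V_pre K D \<sigma> r T \<tau> b - V_pre K D \<sigma> r T \<tau> a) / (b - a) * (u - a) + V_pre K D \<sigma> r T \<tau> a"
proof (cases "a = D")
  case True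
  have "V_pre K D \<sigma> r T \<tau> D = 0" by (simp add: V_pre_def)
  then show ?thesis using V_chordD[OF K sig tT, where D=D and r=r and u=u and b=b] True au ub by simp
next
  case False
  then show ?thesis using V_chord[OF K sig tT, where D=D and r=r and a=a and u=u and b=b] a au ub by simp
qed

lemma upper_pt:
  fixes K D \<sigma> r \<tau> T Sstar u :: real and M :: nat and al be :: "nat \<Rightarrow> real"
  assumes K: "K > 0" and sig: "\<sigma> > 0" and tT: "\<tau> < T"
    and DS: "Sstar > D" and M: "M \<ge> 1"
    and al: "\<And>i. al i = real M / (Sstar - D) * (V_pre K D \<sigma> r T \<tau> (grid_pt D Sstar M i) - V_pre K D \<sigma> r T \<tau> (grid_pt D Sstar M (i - 1)))"
    and be: "\<And>i. be i = V_pre K D \<sigma> r T \<tau> (grid_pt D Sstar M (i - 1)) - al i * grid_pt D Sstar M (i - 1)"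
  shows "V_pre K D \<sigma> r T \<tau> u \<le> (\<Sum>i=1..M. if grid_pt D Sstar M (i - 1) < u \<and> u \<le> grid_pt D Sstar M i then al i * u + be i else 0)
          + (if Sstar < u then 1 * u + (V_pre K D \<sigma> r T \<tau> Sstar - Sstar) else 0)"
proof -
  let ?V = "V_pre K D \<sigma> r T \<tau>"
  let ?S = "grid_pt D Sstar M"
  let ?c = "\<lambda>i. ?S (i - 1) < u \<and> u \<le> ?S i"
  consider (lo) "u \<le> D" | (hi) "Sstar < u" | (mid) "D < u" "u \<le> Sstar" by linarith
  then show ?thesis
  proof cases
    case lo
    have "(\<Sum>i=1..M. if ?c i then al i * u + be i else 0) = 0"
      by (rule sum_none) (use grid_cases(1)[OF DS M, of u] lo in blast)
    moreover have "?V u = 0" using lo by (simp add: V_pre_def)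
    ultimately show ?thesis using lo DS by simp
  next
    case hi
    have "(\<Sum>i=1..M. if ?c i then al i * u + be i else 0) = 0"
      by (rule sum_none) (use grid_cases(1)[OF DS M, of u] hi in blast)
    moreover have "?V u - u \<le> ?V Sstar - Sstar"
      using V_tail_upper[OF K sig tT, where D=D and r=r and a=Sstar and u=u] DS hi by simp
    ultimately show ?thesis using hi by simp
  next
    case mid
    obtain k where k: "k \<in> {1..M}" "?c k" and un: "\<forall>i\<in>{1..M}. ?c i \<longrightarrow> i = k"
      using grid_cases(2)[OF DS M mid] by blast
    have sum: "(\<Sum>i=1..M. if ?c i then al i * u + be i else 0) = al k * u + be k"
      by (rule sum_single[OF k(1) _ un k(2)]) simp
    define c0 where "c0 = (Sstar - D) / real M"
    have c0: "c0 > 0" using DS M by (simp add: c0_def)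
    have ba: "?S k - ?S (k - 1) = c0"
    proof -
      have "?S k - ?S (k - 1) = c0 * real k - c0 * real (k - 1)" by (simp add: grid_pt_def c0_def)
      also have "\<dots> = c0" using k(1) by (simp add: of_nat_diff algebra_simps)
      finally show ?thesis .
    qed
    have aD: "D \<le> ?S (k - 1)" using c0 by (simp add: grid_pt_def c0_def[symmetric])
    have alk: "al k = (?V (?S k) - ?V (?S (k - 1))) / (?S k - ?S (k - 1))"
      unfolding ba al c0_def by simp
    have "?V u \<le> (?V (?S k) - ?V (?S (k - 1))) / (?S k - ?S (k - 1)) * (u - ?S (k - 1)) + ?V (?S (k - 1))"
      by (rule chord_all[OF K sig tT aD]) (use k(2) in auto)
    also have "\<dots> = al k * u + be k" unfolding alk[symmetric] be by (simp add: algebra_simps)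
    finally show ?thesis using sum mid by simp
  qed
qed

lemma lower_pt:
  fixes K D \<sigma> r \<tau> T Sstar u :: real and M :: nat and de et :: "nat \<Rightarrow> real"
  assumes K: "K > 0" and sig: "\<sigma> > 0" and tT: "\<tau> < T"
    and DS: "Sstar > D" and M: "M \<ge> 1"
    and de: "\<And>i. de i = V_pre_deriv K D \<sigma> r T \<tau> ((grid_pt D Sstar M (i - 1) + grid_pt D Sstar M i) / 2)"
    and et: "\<And>i. et i = V_pre K D \<sigma> r T \<tau> ((grid_pt D Sstar M (i - 1) + grid_pt D Sstar M i) / 2)
                  - de i * ((grid_pt D Sstar M (i - 1) + grid_pt D Sstar M i) / 2)"
  shows "(\<Sum>i=1..M. if grid_pt D Sstar M (i - 1) < u \<and> u \<le> grid_pt D Sstar M i then de i * u + et i else 0)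
          + (if Sstar < u then 1 * u + (- (D + K * exp (- r * (T - \<tau>)))) else 0) \<le> V_pre K D \<sigma> r T \<tau> u"
proof -
  let ?V = "V_pre K D \<sigma> r T \<tau>"
  let ?S = "grid_pt D Sstar M"
  let ?c = "\<lambda>i. ?S (i - 1) < u \<and> u \<le> ?S i"
  consider (lo) "u \<le> D" | (hi) "Sstar < u" | (mid) "D < u" "u \<le> Sstar" by linarith
  then show ?thesis
  proof cases
    case lo
    have "(\<Sum>i=1..M. if ?c i then de i * u + et i else 0) = 0"
      by (rule sum_none) (use grid_cases(1)[OF DS M, of u] lo in blast)
    moreover have "?V u = 0" using lo by (simp add: V_pre_def)
    ultimately show ?thesis using lo DS by simp
  next
    case hi
    have "(\<Sum>i=1..M. if ?c i then de i * u + et i else 0) = 0"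
      by (rule sum_none) (use grid_cases(1)[OF DS M, of u] hi in blast)
    moreover have "u - D - K * exp (- r * (T - \<tau>)) \<le> ?V u"
      using V_tail_lower[OF K sig tT, where D=D and r=r and u=u] DS hi by simp
    ultimately show ?thesis using hi by simp
  next
    case mid
    obtain k where k: "k \<in> {1..M}" "?c k" and un: "\<forall>i\<in>{1..M}. ?c i \<longrightarrow> i = k"
      using grid_cases(2)[OF DS M mid] by blast
    have sum: "(\<Sum>i=1..M. if ?c i then de i * u + et i else 0) = de k * u + et k"
      by (rule sum_single[OF k(1) _ un k(2)]) simp
    define m where "m = (?S (k - 1) + ?S k) / 2"
    have aD: "D \<le> ?S (k - 1)" using DS M by (simp add: grid_pt_def)
    have mD: "D < m" unfolding m_def using aD k(2) mid by simp
    have dek: "de k = normal_cdf (d_pre K D \<sigma> r T \<tau> m)"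
      using de[of k] Vderiv_eq[OF K sig tT mD, where r=r] by (simp add: m_def)
    have "?V m + normal_cdf (d_pre K D \<sigma> r T \<tau> m) * (u - m) \<le> ?V u"
      by (rule V_tangent[OF K sig tT mD]) (use mid in simp)
    moreover have "de k * u + et k = ?V m + normal_cdf (d_pre K D \<sigma> r T \<tau> m) * (u - m)"
      unfolding et dek m_def[symmetric] by (simp add: algebra_simps)
    ultimately show ?thesis using sum mid by simp
  qed
qed


lemma V_meas[measurable]: "V_pre K D \<sigma> r T \<tau> \<in> borel_measurable borel"
  unfolding V_pre_def[abs_def] d_pre_def by measurable

lemma cs_eq:
  assumes sig: "\<sigma> > 0" and tau: "\<tau> > 0"
  shows "exp (- r * \<tau>) / (\<sigma> * sqrt (2 * pi * \<tau>)) * ((\<sigma> * sqrt \<tau>) * sqrt (2 * pi)) = exp (- r * \<tau>)"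
proof -
  have eq: "(\<sigma> * sqrt \<tau>) * sqrt (2 * pi) = \<sigma> * sqrt (2 * pi * \<tau>)" by (simp add: real_sqrt_mult)
  have "\<sigma> * sqrt (2 * pi * \<tau>) > 0" using sig tau by simp
  then show ?thesis unfolding eq using sig tau by simp
qed

lemma cI0:
  assumes sig: "\<sigma> > 0" and tau: "\<tau> > 0"
  shows "exp (- r * \<tau>) / (\<sigma> * sqrt (2 * pi * \<tau>)) * I0 (ln S + (r - \<sigma>^2 / 2) * \<tau>) (\<sigma> * sqrt \<tau>) (ln b)
         = exp (- r * \<tau>) * normal_cdf (d_lvl \<sigma> r \<tau> S b - \<sigma> * sqrt \<tau>)"
proof -
  define s where "s = \<sigma> * sqrt \<tau>"
  have s: "s > 0" using sig tau by (simp add: s_def)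
  have ss: "s * s = \<sigma>^2 * \<tau>" using tau by (simp add: s_def power2_eq_square)
  have arg: "(ln S + (r - \<sigma>^2 / 2) * \<tau> - ln b) / s = d_lvl \<sigma> r \<tau> S b - s"
  proof -
    have "d_lvl \<sigma> r \<tau> S b - s = (ln S - ln b + (r + \<sigma>^2 / 2) * \<tau> - s * s) / s"
      using s unfolding d_lvl_def s_def[symmetric] by (simp add: field_simps)
    also have "\<dots> = (ln S + (r - \<sigma>^2 / 2) * \<tau> - ln b) / s" unfolding ss by (simp add: algebra_simps)
    finally show ?thesis by simp
  qed
  have csq: "exp (- r * \<tau>) / (\<sigma> * sqrt (2 * pi * \<tau>)) * (s * sqrt (2 * pi)) = exp (- r * \<tau>)"
    using cs_eq[OF sig tau, of r] unfolding s_def .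
  have "exp (- r * \<tau>) / (\<sigma> * sqrt (2 * pi * \<tau>)) * I0 (ln S + (r - \<sigma>^2 / 2) * \<tau>) s (ln b)
    = (exp (- r * \<tau>) / (\<sigma> * sqrt (2 * pi * \<tau>)) * (s * sqrt (2 * pi))) * normal_cdf ((ln S + (r - \<sigma>^2 / 2) * \<tau> - ln b) / s)"
    unfolding I0_def by (simp only: mult.assoc)
  also have "\<dots> = exp (- r * \<tau>) * normal_cdf (d_lvl \<sigma> r \<tau> S b - s)"
    unfolding csq arg ..
  finally show ?thesis unfolding s_def .
qed

lemma cI1:
  assumes sig: "\<sigma> > 0" and tau: "\<tau> > 0" and S: "S > 0"
  shows "exp (- r * \<tau>) / (\<sigma> * sqrt (2 * pi * \<tau>)) * I1 (ln S + (r - \<sigma>^2 / 2) * \<tau>) (\<sigma> * sqrt \<tau>) (ln b)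
         = S * normal_cdf (d_lvl \<sigma> r \<tau> S b)"
proof -
  define s where "s = \<sigma> * sqrt \<tau>"
  have s: "s > 0" using sig tau by (simp add: s_def)
  have ss: "s ^ 2 = \<sigma>^2 * \<tau>" using tau by (simp add: s_def power_mult_distrib)
  have arg: "(ln S + (r - \<sigma>^2 / 2) * \<tau> + s ^ 2 - ln b) / s = d_lvl \<sigma> r \<tau> S b"
    unfolding d_lvl_def s_def[symmetric] ss by (simp add: algebra_simps)
  have ex: "exp (- r * \<tau>) * exp (ln S + (r - \<sigma>^2 / 2) * \<tau> + s ^ 2 / 2) = S"
  proof -
    have h: "- r * \<tau> + (ln S + (r - \<sigma>^2 / 2) * \<tau> + s ^ 2 / 2) = ln S" unfolding ss by (simp add: algebra_simps)
    have "exp (- r * \<tau>) * exp (ln S + (r - \<sigma>^2 / 2) * \<tau> + s ^ 2 / 2) = exp (- r * \<tau> + (ln S + (r - \<sigma>^2 / 2) * \<tau> + s ^ 2 / 2))"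
      by (rule exp_add[symmetric])
    also have "\<dots> = exp (ln S)" by (simp only: h)
    also have "\<dots> = S" using S by simp
    finally show ?thesis .
  qed
  have "exp (- r * \<tau>) / (\<sigma> * sqrt (2 * pi * \<tau>)) * I1 (ln S + (r - \<sigma>^2 / 2) * \<tau>) s (ln b)
      = (exp (- r * \<tau>) / (\<sigma> * sqrt (2 * pi * \<tau>)) * (s * sqrt (2 * pi))) * exp (ln S + (r - \<sigma>^2 / 2) * \<tau> + s ^ 2 / 2)
        * normal_cdf ((ln S + (r - \<sigma>^2 / 2) * \<tau> + s ^ 2 - ln b) / s)"
    unfolding I1_def by (simp add: mult_ac)
  also have "\<dots> = S * normal_cdf (d_lvl \<sigma> r \<tau> S b)"
  proof -
    have csq: "exp (- r * \<tau>) / (\<sigma> * sqrt (2 * pi * \<tau>)) * (s * sqrt (2 * pi)) = exp (- r * \<tau>)"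
      using cs_eq[OF sig tau, of r] unfolding s_def .
    show ?thesis unfolding arg csq ex ..
  qed
  finally show ?thesis unfolding s_def .
qed

lemma kern:
  assumes sig: "\<sigma> > 0" and tau: "\<tau> > 0"
  shows "V_zero K D \<sigma> r T \<tau> S = exp (- r * \<tau>) / (\<sigma> * sqrt (2 * pi * \<tau>)) *
     integral\<^sup>L lborel (\<lambda>y. V_pre K D \<sigma> r T \<tau> (exp y) * gk (ln S + (r - \<sigma>^2 / 2) * \<tau>) (\<sigma> * sqrt \<tau>) y)"
proof -
  have "(\<sigma> * sqrt \<tau>) ^ 2 = \<sigma>^2 * \<tau>" using tau by (simp add: power_mult_distrib)
  then have "\<And>y. gk (ln S + (r - \<sigma>^2 / 2) * \<tau>) (\<sigma> * sqrt \<tau>) y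
     = exp (- ((ln S + (r - \<sigma>^2 / 2) * \<tau> - y)^2) / (2 * \<sigma>^2 * \<tau>))"
    unfolding gk_def by (simp add: mult.assoc)
  then show ?thesis unfolding V_zero_def Let_def by simp
qed


lemma dist_help:
  fixes cc :: real
  shows "cc * ((\<Sum>i\<in>A. p i * (a1 i - b1 i) + q i * (a0 i - b0 i)) + (u * t1 + v * t0))
    = (\<Sum>i\<in>A. p i * (cc * a1 i - cc * b1 i) + q i * (cc * a0 i - cc * b0 i)) + (u * (cc * t1) + v * (cc * t0))"
  by (simp add: sum_distrib_left algebra_simps)

theorem theorem1:
  fixes K D \<sigma> r \<tau> T Sstar S :: real and M :: nat
  assumes "K > 0" and "D > 0" and "\<sigma> > 0" and "0 < \<tau>" and "\<tau> < T"
    and "Sstar > D" and "M \<ge> 1" and "S > 0"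
  shows "V_lower K D \<sigma> r T \<tau> Sstar M S \<le> V_zero K D \<sigma> r T \<tau> S
       \<and> V_zero K D \<sigma> r T \<tau> S \<le> V_upper K D \<sigma> r T \<tau> Sstar M S"
proof -
  note K = assms(1) and Dp = assms(2) and sig = assms(3) and tau = assms(4) and tT = assms(5)
    and DS = assms(6) and M = assms(7) and Sp = assms(8)
  let ?s = "\<sigma> * sqrt \<tau>"
  let ?x = "ln S + (r - \<sigma>^2 / 2) * \<tau>"
  let ?c = "exp (- r * \<tau>) / (\<sigma> * sqrt (2 * pi * \<tau>))"
  let ?V = "V_pre K D \<sigma> r T \<tau>"
  let ?S = "grid_pt D Sstar M"
  let ?g = "gk ?x ?s"
  let ?d = "d_lvl \<sigma> r \<tau> S"
  let ?Kp = "K * exp (- r * (T - \<tau>))"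
  have s: "?s > 0" using sig tau by simp
  have c: "?c > 0" using sig tau by simp
  define al where "al i = real M / (Sstar - D) * (?V (?S i) - ?V (?S (i - 1)))" for i
  define be where "be i = ?V (?S (i - 1)) - al i * ?S (i - 1)" for i
  define de where "de i = V_pre_deriv K D \<sigma> r T \<tau> ((?S (i - 1) + ?S i) / 2)" for i
  define et where "et i = ?V ((?S (i - 1) + ?S i) / 2) - de i * ((?S (i - 1) + ?S i) / 2)" for i
  define Uf where "Uf = (\<lambda>y. (\<Sum>i=1..M. if ?S (i - 1) < exp y \<and> exp y \<le> ?S i then (al i * exp y + be i) * ?g y else 0)
      + (if Sstar < exp y then (1 * exp y + (?V Sstar - Sstar)) * ?g y else 0))"
  define Lf where "Lf = (\<lambda>y. (\<Sum>i=1..M. if ?S (i - 1) < exp y \<and> exp y \<le> ?S i then (de i * exp y + et i) * ?g y else 0)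
      + (if Sstar < exp y then (1 * exp y + (- (D + ?Kp))) * ?g y else 0))"
  define Vf where "Vf = (\<lambda>y. ?V (exp y) * ?g y)"
  have Si_pos: "?S j > 0" for j
  proof -
    have "0 \<le> (Sstar - D) / real M * real j" using DS by simp
    then show ?thesis using Dp by (simp add: grid_pt_def)
  qed
  have Si_mono: "?S (i - 1) \<le> ?S i" for i
  proof -
    have "(Sstar - D) / real M * real (i - 1) \<le> (Sstar - D) / real M * real i"
      by (rule mult_left_mono) (use DS in auto)
    then show ?thesis by (simp add: grid_pt_def)
  qed
  have ifm: "\<And>P a (b::real). (if P then a else 0) * b = (if P then a * b else 0)" by simp
  have U_pt: "Vf y \<le> Uf y" for y
  proof -
    have "?V (exp y) \<le> (\<Sum>i=1..M. if ?S (i - 1) < exp y \<and> exp y \<le> ?S i then al i * exp y + be i else 0)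
          + (if Sstar < exp y then 1 * exp y + (?V Sstar - Sstar) else 0)"
      by (rule upper_pt[OF K sig tT DS M al_def be_def])
    then have "?V (exp y) * ?g y \<le> ((\<Sum>i=1..M. if ?S (i - 1) < exp y \<and> exp y \<le> ?S i then al i * exp y + be i else 0)
          + (if Sstar < exp y then 1 * exp y + (?V Sstar - Sstar) else 0)) * ?g y"
      by (rule mult_right_mono) (rule gk_nonneg)
    then show ?thesis unfolding Vf_def Uf_def by (simp only: sum_distrib_right distrib_right ifm)
  qed
  have L_pt: "Lf y \<le> Vf y" for y
  proof -
    have "(\<Sum>i=1..M. if ?S (i - 1) < exp y \<and> exp y \<le> ?S i then de i * exp y + et i else 0)
          + (if Sstar < exp y then 1 * exp y + (- (D + ?Kp)) else 0) \<le> ?V (exp y)"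
      by (rule lower_pt[OF K sig tT DS M de_def et_def])
    then have "((\<Sum>i=1..M. if ?S (i - 1) < exp y \<and> exp y \<le> ?S i then de i * exp y + et i else 0)
          + (if Sstar < exp y then 1 * exp y + (- (D + ?Kp)) else 0)) * ?g y \<le> ?V (exp y) * ?g y"
      by (rule mult_right_mono) (rule gk_nonneg)
    then show ?thesis unfolding Vf_def Lf_def by (simp only: sum_distrib_right distrib_right ifm)
  qed
  have cI0': "?c * I0 ?x ?s (ln b) = exp (- r * \<tau>) * normal_cdf (?d b - ?s)" for b
    by (rule cI0[OF sig tau])
  have cI1': "?c * I1 ?x ?s (ln b) = S * normal_cdf (?d b)" for b
    by (rule cI1[OF sig tau Sp])
  have pmU1: "integrable lborel (\<lambda>y. if ?S (i - 1) < exp y \<and> exp y \<le> ?S i then (al i * exp y + be i) * ?g y else 0)" for i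
    by (rule piece_mid(1)[OF s Si_pos Si_mono])
  have pmU2: "integral\<^sup>L lborel (\<lambda>y. if ?S (i - 1) < exp y \<and> exp y \<le> ?S i then (al i * exp y + be i) * ?g y else 0)
      = al i * (I1 ?x ?s (ln (?S (i - 1))) - I1 ?x ?s (ln (?S i))) + be i * (I0 ?x ?s (ln (?S (i - 1))) - I0 ?x ?s (ln (?S i)))" for i
    by (rule piece_mid(2)[OF s Si_pos Si_mono])
  have ptU1: "integrable lborel (\<lambda>y. if Sstar < exp y then (1 * exp y + (?V Sstar - Sstar)) * ?g y else 0)"
    by (rule piece_tail(1)[OF s]) (use Dp DS in simp)
  have ptU2: "integral\<^sup>L lborel (\<lambda>y. if Sstar < exp y then (1 * exp y + (?V Sstar - Sstar)) * ?g y else 0)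
      = 1 * I1 ?x ?s (ln Sstar) + (?V Sstar - Sstar) * I0 ?x ?s (ln Sstar)"
    by (rule piece_tail(2)[OF s]) (use Dp DS in simp)
  have sU1: "integrable lborel (\<lambda>y. \<Sum>i=1..M. if ?S (i - 1) < exp y \<and> exp y \<le> ?S i then (al i * exp y + be i) * ?g y else 0)"
    by (rule Bochner_Integration.integrable_sum) (rule pmU1)
  have intU: "integrable lborel Uf"
    unfolding Uf_def by (rule Bochner_Integration.integrable_add[OF sU1 ptU1])
  have IU: "integral\<^sup>L lborel Uf = (\<Sum>i=1..M. al i * (I1 ?x ?s (ln (?S (i - 1))) - I1 ?x ?s (ln (?S i))) + be i * (I0 ?x ?s (ln (?S (i - 1))) - I0 ?x ?s (ln (?S i))))
      + (1 * I1 ?x ?s (ln Sstar) + (?V Sstar - Sstar) * I0 ?x ?s (ln Sstar))"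
  proof -
    have "integral\<^sup>L lborel Uf = integral\<^sup>L lborel (\<lambda>y. \<Sum>i=1..M. if ?S (i - 1) < exp y \<and> exp y \<le> ?S i then (al i * exp y + be i) * ?g y else 0)
       + integral\<^sup>L lborel (\<lambda>y. if Sstar < exp y then (1 * exp y + (?V Sstar - Sstar)) * ?g y else 0)"
      unfolding Uf_def by (rule Bochner_Integration.integral_add[OF sU1 ptU1])
    also have "integral\<^sup>L lborel (\<lambda>y. \<Sum>i=1..M. if ?S (i - 1) < exp y \<and> exp y \<le> ?S i then (al i * exp y + be i) * ?g y else 0)
       = (\<Sum>i=1..M. integral\<^sup>L lborel (\<lambda>y. if ?S (i - 1) < exp y \<and> exp y \<le> ?S i then (al i * exp y + be i) * ?g y else 0))"
      by (rule Bochner_Integration.integral_sum) (rule pmU1)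
    finally show ?thesis unfolding pmU2 ptU2 .
  qed
  have cU: "?c * integral\<^sup>L lborel Uf = V_upper K D \<sigma> r T \<tau> Sstar M S"
  proof -
    have "?c * integral\<^sup>L lborel Uf = (\<Sum>i=1..M. al i * (?c * I1 ?x ?s (ln (?S (i - 1))) - ?c * I1 ?x ?s (ln (?S i))) + be i * (?c * I0 ?x ?s (ln (?S (i - 1))) - ?c * I0 ?x ?s (ln (?S i))))
      + (1 * (?c * I1 ?x ?s (ln Sstar)) + (?V Sstar - Sstar) * (?c * I0 ?x ?s (ln Sstar)))"
      unfolding IU by (rule dist_help)
    also have "\<dots> = (\<Sum>i=1..M. al i * (S * normal_cdf (?d (?S (i - 1))) - S * normal_cdf (?d (?S i)))
           + be i * (exp (- r * \<tau>) * normal_cdf (?d (?S (i - 1)) - ?s) - exp (- r * \<tau>) * normal_cdf (?d (?S i) - ?s)))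
      + (1 * (S * normal_cdf (?d Sstar)) + (?V Sstar - Sstar) * (exp (- r * \<tau>) * normal_cdf (?d Sstar - ?s)))"
      unfolding cI0' cI1' ..
    also have "\<dots> = V_upper K D \<sigma> r T \<tau> Sstar M S"
      unfolding V_upper_def Let_def al_def[symmetric] be_def[symmetric]
      by (simp add: algebra_simps)
    finally show ?thesis .
  qed
  have pmL1: "integrable lborel (\<lambda>y. if ?S (i - 1) < exp y \<and> exp y \<le> ?S i then (de i * exp y + et i) * ?g y else 0)" for i
    by (rule piece_mid(1)[OF s Si_pos Si_mono])
  have pmL2: "integral\<^sup>L lborel (\<lambda>y. if ?S (i - 1) < exp y \<and> exp y \<le> ?S i then (de i * exp y + et i) * ?g y else 0)
      = de i * (I1 ?x ?s (ln (?S (i - 1))) - I1 ?x ?s (ln (?S i))) + et i * (I0 ?x ?s (ln (?S (i - 1))) - I0 ?x ?s (ln (?S i)))" for i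
    by (rule piece_mid(2)[OF s Si_pos Si_mono])
  have ptL1: "integrable lborel (\<lambda>y. if Sstar < exp y then (1 * exp y + (- (D + ?Kp))) * ?g y else 0)"
    by (rule piece_tail(1)[OF s]) (use Dp DS in simp)
  have ptL2: "integral\<^sup>L lborel (\<lambda>y. if Sstar < exp y then (1 * exp y + (- (D + ?Kp))) * ?g y else 0)
      = 1 * I1 ?x ?s (ln Sstar) + (- (D + ?Kp)) * I0 ?x ?s (ln Sstar)"
    by (rule piece_tail(2)[OF s]) (use Dp DS in simp)
  have sL1: "integrable lborel (\<lambda>y. \<Sum>i=1..M. if ?S (i - 1) < exp y \<and> exp y \<le> ?S i then (de i * exp y + et i) * ?g y else 0)"
    by (rule Bochner_Integration.integrable_sum) (rule pmL1)
  have intL: "integrable lborel Lf"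
    unfolding Lf_def by (rule Bochner_Integration.integrable_add[OF sL1 ptL1])
  have IL: "integral\<^sup>L lborel Lf = (\<Sum>i=1..M. de i * (I1 ?x ?s (ln (?S (i - 1))) - I1 ?x ?s (ln (?S i))) + et i * (I0 ?x ?s (ln (?S (i - 1))) - I0 ?x ?s (ln (?S i))))
      + (1 * I1 ?x ?s (ln Sstar) + (- (D + ?Kp)) * I0 ?x ?s (ln Sstar))"
  proof -
    have "integral\<^sup>L lborel Lf = integral\<^sup>L lborel (\<lambda>y. \<Sum>i=1..M. if ?S (i - 1) < exp y \<and> exp y \<le> ?S i then (de i * exp y + et i) * ?g y else 0)
       + integral\<^sup>L lborel (\<lambda>y. if Sstar < exp y then (1 * exp y + (- (D + ?Kp))) * ?g y else 0)"
      unfolding Lf_def by (rule Bochner_Integration.integral_add[OF sL1 ptL1])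
    also have "integral\<^sup>L lborel (\<lambda>y. \<Sum>i=1..M. if ?S (i - 1) < exp y \<and> exp y \<le> ?S i then (de i * exp y + et i) * ?g y else 0)
       = (\<Sum>i=1..M. integral\<^sup>L lborel (\<lambda>y. if ?S (i - 1) < exp y \<and> exp y \<le> ?S i then (de i * exp y + et i) * ?g y else 0))"
      by (rule Bochner_Integration.integral_sum) (rule pmL1)
    finally show ?thesis unfolding pmL2 ptL2 .
  qed
  have cL: "?c * integral\<^sup>L lborel Lf = V_lower K D \<sigma> r T \<tau> Sstar M S"
  proof -
    have "?c * integral\<^sup>L lborel Lf = (\<Sum>i=1..M. de i * (?c * I1 ?x ?s (ln (?S (i - 1))) - ?c * I1 ?x ?s (ln (?S i))) + et i * (?c * I0 ?x ?s (ln (?S (i - 1))) - ?c * I0 ?x ?s (ln (?S i))))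
      + (1 * (?c * I1 ?x ?s (ln Sstar)) + (- (D + ?Kp)) * (?c * I0 ?x ?s (ln Sstar)))"
      unfolding IL by (rule dist_help)
    also have "\<dots> = (\<Sum>i=1..M. de i * (S * normal_cdf (?d (?S (i - 1))) - S * normal_cdf (?d (?S i)))
           + et i * (exp (- r * \<tau>) * normal_cdf (?d (?S (i - 1)) - ?s) - exp (- r * \<tau>) * normal_cdf (?d (?S i) - ?s)))
      + (1 * (S * normal_cdf (?d Sstar)) + (- (D + ?Kp)) * (exp (- r * \<tau>) * normal_cdf (?d Sstar - ?s)))"
      unfolding cI0' cI1' ..
    also have "\<dots> = V_lower K D \<sigma> r T \<tau> Sstar M S"
      unfolding V_lower_def Let_def de_def[symmetric] et_def[symmetric]
      by (simp add: algebra_simps sum.distrib sum_subtractf sum_distrib_left)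
    finally show ?thesis .
  qed
  have measV: "Vf \<in> borel_measurable lborel"
    unfolding Vf_def by measurable
  have intV: "integrable lborel Vf"
  proof (rule Bochner_Integration.integrable_bound[OF _ measV])
    show "integrable lborel (\<lambda>y. \<bar>Uf y\<bar> + \<bar>Lf y\<bar>)"
      by (intro Bochner_Integration.integrable_add integrable_abs intU intL)
    show "AE y in lborel. norm (Vf y) \<le> norm (\<bar>Uf y\<bar> + \<bar>Lf y\<bar>)"
    proof (rule AE_I2)
      fix y
      have "Lf y \<le> Vf y" "Vf y \<le> Uf y" by (rule L_pt, rule U_pt)
      then show "norm (Vf y) \<le> norm (\<bar>Uf y\<bar> + \<bar>Lf y\<bar>)" by simp
    qed
  qed
  have i1: "integral\<^sup>L lborel Lf \<le> integral\<^sup>L lborel Vf"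
    by (rule integral_mono[OF intL intV L_pt])
  have i2: "integral\<^sup>L lborel Vf \<le> integral\<^sup>L lborel Uf"
    by (rule integral_mono[OF intV intU U_pt])
  have VZ: "V_zero K D \<sigma> r T \<tau> S = ?c * integral\<^sup>L lborel Vf"
    unfolding Vf_def by (rule kern[OF sig tau])
  show ?thesis
    unfolding VZ cL[symmetric] cU[symmetric]
    using mult_left_mono[OF i1, of ?c] mult_left_mono[OF i2, of ?c] c by simp
qed


end
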